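(* Let $T$ and $S$ be binary search trees on the same finite set of keys, with nodes identified via their keys, and let $v$ be a node. Splaying $v$ in $S$ (while $T$ stays fixed) has amortized cost at most $4+6\,d_T(v)$, where $d_T(v)$ is the depth of $v$ in $T$.
   Context: Splaying a node $x$ in $S$ repeatedly applies the following steps until $x$ is the root, where $y$ is the parent and $z$ the grandparent of $x$: Zig (if $y$ is the root, rotate $x$ over $y$); ZigZig (if $x$ and $y$ are both left children or both right children, rotate $y$ over $z$ and then $x$ over $y$); ZigZag (otherwise, rotate $x$ over $y$ and then $x$ over $z$). The actual cost of a Zig step is $1$ and of a ZigZig or ZigZag step is $2$ (so the actual cost of splaying equals the depth of $x$ in $S$). Potential: for every node $u$, $w_T(u)=1/4^{d_T(u)}$ where $d_T(u)$ is the depth of $u$ in $T$ (root has depth $0$), $w(u)=w_T(u)$; $s_T(u)$ (resp. $s(u)$) is the sum of weights in the subtree of $u$ in $T$ (resp. $S$), including $u$; $r_T(u)=\log_2 s_T(u)$, $r(u)=\log_2 s(u)$; $P(T)=\sum_u r_T(u)$, $P(S)=\sum_u r(u)$ and $\Phi=P(S)-P(T)$. The amortized cost of an operation is its actual cost plus $\Phi_{\text{after}}-\Phi_{\text{before}}$. *)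

theory Defs
  imports Complex_Main "HOL-Library.Tree"
begin

fun key_depth :: "'a::linorder tree \<Rightarrow> 'a \<Rightarrow> nat" where
  "key_depth Leaf x = 0"
| "key_depth (Node l a r) x =
     (if x = a then 0 else if x < a then Suc (key_depth l x) else Suc (key_depth r x))"

fun subtree_at :: "'a::linorder tree \<Rightarrow> 'a \<Rightarrow> 'a tree" where
  "subtree_at Leaf x = Leaf"
| "subtree_at (Node l a r) x =
     (if x = a then Node l a r else if x < a then subtree_at l x else subtree_at r x)"

fun rot_right :: "'a tree \<Rightarrow> 'a tree" where
  "rot_right (Node (Node A x B) y C) = Node A x (Node B y C)"
| "rot_right t = t"

fun rot_left :: "'a tree \<Rightarrow> 'a tree" where
  "rot_left (Node A y (Node B x C)) = Node (Node A y B) x C"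
| "rot_left t = t"

(* Bottom-up splaying of x when x is at EVEN depth in the current tree:
   only ZigZig / ZigZag steps occur.  The steps performed while x is below
   the grandchild g of the root all happen inside the subtree of g, and they
   are exactly the splaying of x inside that subtree; the final step is the
   ZigZig / ZigZag with grandparent = root. *)
fun splay_even :: "'a::linorder \<Rightarrow> 'a tree \<Rightarrow> 'a tree" where
  "splay_even x Leaf = Leaf"
| "splay_even x (Node l a r) =
    (if x = a then Node l a r
     else if x < a then
       (case l of
          Leaf \<Rightarrow> Node l a r
        | Node ll b lr \<Rightarrow>
            (if x = b then Node l a r
             else if x < b then
               \<comment> \<open>ZigZig: rotate b over a, then x over b\<close>
               rot_right (rot_right (Node (Node (splay_even x ll) b lr) a r))
             else
               \<comment> \<open>ZigZag: rotate x over b, then x over a\<close>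
               rot_right (Node (rot_left (Node ll b (splay_even x lr))) a r)))
     else
       (case r of
          Leaf \<Rightarrow> Node l a r
        | Node rl b rr \<Rightarrow>
            (if x = b then Node l a r
             else if b < x then
               \<comment> \<open>ZigZig\<close>
               rot_left (rot_left (Node l a (Node rl b (splay_even x rr))))
             else
               \<comment> \<open>ZigZag\<close>
               rot_left (Node l a (rot_right (Node (splay_even x rl) b rr))))))"

fun splay :: "'a::linorder \<Rightarrow> 'a tree \<Rightarrow> 'a tree" where
  "splay x Leaf = Leaf"
| "splay x (Node l a r) =
    (if even (key_depth (Node l a r) x) then splay_even x (Node l a r)
     else if x < a then rot_right (Node (splay_even x l) a r)
     else rot_left (Node l a (splay_even x r)))"

definition weight :: "'a::linorder tree \<Rightarrow> 'a \<Rightarrow> real" where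
  "weight T u = 1 / 4 ^ key_depth T u"

definition wsize :: "'a::linorder tree \<Rightarrow> 'a tree \<Rightarrow> 'a \<Rightarrow> real" where
  "wsize T X u = (\<Sum>y\<in>set_tree (subtree_at X u). weight T y)"

definition pot :: "'a::linorder tree \<Rightarrow> 'a tree \<Rightarrow> real" where
  "pot T X = (\<Sum>u\<in>set_tree X. log 2 (wsize T X u))"

definition Phi :: "'a::linorder tree \<Rightarrow> 'a tree \<Rightarrow> real" where
  "Phi T S = pot T S - pot T T"

(* actual cost of splaying v in S = depth of v in S *)
definition splay_amortized_cost :: "'a::linorder tree \<Rightarrow> 'a tree \<Rightarrow> 'a \<Rightarrow> real" where
  "splay_amortized_cost T S v = real (key_depth S v) + (Phi T (splay v S) - Phi T S)"

end

theory Submission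
  imports Defs
begin


definition ws :: "('a \<Rightarrow> real) \<Rightarrow> 'a tree \<Rightarrow> real" where
  "ws w t = sum w (set_tree t)"

fun Ps :: "('a \<Rightarrow> real) \<Rightarrow> 'a tree \<Rightarrow> real" where
  "Ps w Leaf = 0"
| "Ps w (Node l a r) = Ps w l + Ps w r + log 2 (ws w (Node l a r))"

lemma ws_mono: "\<forall>y. w y > 0 \<Longrightarrow> set_tree s \<subseteq> set_tree t \<Longrightarrow> ws w s \<le> ws w t"
  unfolding ws_def by (rule sum_mono2) (auto intro: less_imp_le)

lemma ws_pos: "\<forall>y. w y > 0 \<Longrightarrow> ws w (Node l a r) > 0"
  unfolding ws_def by (rule sum_pos) auto

lemma log_mono2: "0 < x \<Longrightarrow> x \<le> y \<Longrightarrow> log 2 x \<le> log 2 y"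
  by simp

lemma key_ineq:
  fixes a b c :: real
  assumes "a > 0" "b > 0" "a + b \<le> c"
  shows "log 2 a + log 2 b + 2 \<le> 2 * log 2 c"
proof -
  have "0 \<le> (a-b)^2" by simp
  hence "4 * a * b \<le> (a+b)^2" by (simp add: power2_eq_square algebra_simps)
  also have "\<dots> \<le> c^2" using assms by (intro power_mono) auto
  finally have h: "4 * a * b \<le> c^2" .
  have "log 2 (4*a*b) \<le> log 2 (c^2)" using h assms by (intro log_mono2) auto
  moreover have "log 2 (4*a*b) = 2 + log 2 a + log 2 b" using assms
  proof -
    have "log 2 (4::real) = log 2 (2^2)" by simp
    also have "\<dots> = 2" by (subst log_pow_cancel) auto
    finally show ?thesis using assms by (simp add: log_mult)
  qed
  moreover have "log 2 (c^2) = 2 * log 2 c" using assms by (simp add: log_nat_power)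
  ultimately show ?thesis by linarith
qed

lemma wsN: "ws w (Node l a r) = sum w (set_tree l \<union> {a} \<union> set_tree r)"
  by (simp add: ws_def Un_insert_right)

lemma zigzig_l:
  assumes pos: "\<forall>y. w y > 0"
    and disj: "set_tree (Node A x B) \<inter> set_tree (Node lr a r) = {}"
  shows "Ps w (Node A x (Node B b (Node lr a r))) - Ps w (Node (Node (Node A x B) b lr) a r) + 2
     \<le> 3 * (log 2 (ws w (Node (Node (Node A x B) b lr) a r)) - log 2 (ws w (Node A x B)))"
proof -
  define W where "W = ws w (Node (Node (Node A x B) b lr) a r)"
  have e: "ws w (Node A x (Node B b (Node lr a r))) = W" unfolding W_def ws_def
    by (rule arg_cong[where f="sum w"]) auto
  have 1: "log 2 (ws w (Node B b (Node lr a r))) \<le> log 2 W" unfolding W_def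
    by (intro log_mono2 ws_pos[OF pos] ws_mono[OF pos]) auto
  have 2: "log 2 (ws w (Node A x B)) \<le> log 2 (ws w (Node (Node A x B) b lr))"
    by (intro log_mono2 ws_pos[OF pos] ws_mono[OF pos]) auto
  have 3: "log 2 (ws w (Node A x B)) + log 2 (ws w (Node lr a r)) + 2 \<le> 2 * log 2 W"
  proof (rule key_ineq[OF ws_pos[OF pos] ws_pos[OF pos]])
    have "ws w (Node A x B) + ws w (Node lr a r) = sum w (set_tree (Node A x B) \<union> set_tree (Node lr a r))"
      unfolding ws_def by (rule sum.union_disjoint[symmetric]) (use disj in auto)
    also have "\<dots> \<le> W" unfolding W_def ws_def by (rule sum_mono2) (use pos in \<open>auto intro: less_imp_le\<close>)
    finally show "ws w (Node A x B) + ws w (Node lr a r) \<le> W" .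
  qed
  have 4: "log 2 (ws w (Node A x B)) \<le> log 2 W" unfolding W_def
    by (intro log_mono2 ws_pos[OF pos] ws_mono[OF pos]) auto
  have "Ps w (Node A x (Node B b (Node lr a r))) - Ps w (Node (Node (Node A x B) b lr) a r) + 2
    = log 2 (ws w (Node B b (Node lr a r))) + log 2 (ws w (Node lr a r)) - log 2 (ws w (Node A x B))
      - log 2 (ws w (Node (Node A x B) b lr)) + 2" using e by (simp add: W_def)
  then show ?thesis using 1 2 3 4 unfolding W_def by (smt (verit))
qed

lemma zigzag_l:
  assumes pos: "\<forall>y. w y > 0"
    and disj: "set_tree (Node ll b A) \<inter> set_tree (Node B a r) = {}"
  shows "Ps w (Node (Node ll b A) x (Node B a r)) - Ps w (Node (Node ll b (Node A x B)) a r) + 2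
     \<le> 3 * (log 2 (ws w (Node (Node ll b (Node A x B)) a r)) - log 2 (ws w (Node A x B)))"
proof -
  define W where "W = ws w (Node (Node ll b (Node A x B)) a r)"
  have e: "ws w (Node (Node ll b A) x (Node B a r)) = W" unfolding W_def ws_def
    by (rule arg_cong[where f="sum w"]) auto
  have 2: "log 2 (ws w (Node A x B)) \<le> log 2 (ws w (Node ll b (Node A x B)))"
    by (intro log_mono2 ws_pos[OF pos] ws_mono[OF pos]) auto
  have 3: "log 2 (ws w (Node ll b A)) + log 2 (ws w (Node B a r)) + 2 \<le> 2 * log 2 W"
  proof (rule key_ineq[OF ws_pos[OF pos] ws_pos[OF pos]])
    have "ws w (Node ll b A) + ws w (Node B a r) = sum w (set_tree (Node ll b A) \<union> set_tree (Node B a r))"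
      unfolding ws_def by (rule sum.union_disjoint[symmetric]) (use disj in auto)
    also have "\<dots> \<le> W" unfolding W_def ws_def by (rule sum_mono2) (use pos in \<open>auto intro: less_imp_le\<close>)
    finally show "ws w (Node ll b A) + ws w (Node B a r) \<le> W" .
  qed
  have 4: "log 2 (ws w (Node A x B)) \<le> log 2 W" unfolding W_def
    by (intro log_mono2 ws_pos[OF pos] ws_mono[OF pos]) auto
  have "Ps w (Node (Node ll b A) x (Node B a r)) - Ps w (Node (Node ll b (Node A x B)) a r) + 2
    = log 2 (ws w (Node ll b A)) + log 2 (ws w (Node B a r)) - log 2 (ws w (Node A x B))
      - log 2 (ws w (Node ll b (Node A x B))) + 2" using e by (simp add: W_def)
  then show ?thesis using 2 3 4 unfolding W_def by (smt (verit))
qed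

lemma zigzig_r:
  assumes pos: "\<forall>y. w y > 0"
    and disj: "set_tree (Node l a rl) \<inter> set_tree (Node A x B) = {}"
  shows "Ps w (Node (Node (Node l a rl) b A) x B) - Ps w (Node l a (Node rl b (Node A x B))) + 2
     \<le> 3 * (log 2 (ws w (Node l a (Node rl b (Node A x B)))) - log 2 (ws w (Node A x B)))"
proof -
  define W where "W = ws w (Node l a (Node rl b (Node A x B)))"
  have e: "ws w (Node (Node (Node l a rl) b A) x B) = W" unfolding W_def ws_def
    by (rule arg_cong[where f="sum w"]) auto
  have 1: "log 2 (ws w (Node (Node l a rl) b A)) \<le> log 2 W" unfolding W_def
    by (intro log_mono2 ws_pos[OF pos] ws_mono[OF pos]) auto
  have 2: "log 2 (ws w (Node A x B)) \<le> log 2 (ws w (Node rl b (Node A x B)))"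
    by (intro log_mono2 ws_pos[OF pos] ws_mono[OF pos]) auto
  have 3: "log 2 (ws w (Node l a rl)) + log 2 (ws w (Node A x B)) + 2 \<le> 2 * log 2 W"
  proof (rule key_ineq[OF ws_pos[OF pos] ws_pos[OF pos]])
    have "ws w (Node l a rl) + ws w (Node A x B) = sum w (set_tree (Node l a rl) \<union> set_tree (Node A x B))"
      unfolding ws_def by (rule sum.union_disjoint[symmetric]) (use disj in auto)
    also have "\<dots> \<le> W" unfolding W_def ws_def by (rule sum_mono2) (use pos in \<open>auto intro: less_imp_le\<close>)
    finally show "ws w (Node l a rl) + ws w (Node A x B) \<le> W" .
  qed
  have 4: "log 2 (ws w (Node A x B)) \<le> log 2 W" unfolding W_def
    by (intro log_mono2 ws_pos[OF pos] ws_mono[OF pos]) auto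
  have "Ps w (Node (Node (Node l a rl) b A) x B) - Ps w (Node l a (Node rl b (Node A x B))) + 2
    = log 2 (ws w (Node l a rl)) + log 2 (ws w (Node (Node l a rl) b A)) - log 2 (ws w (Node A x B))
      - log 2 (ws w (Node rl b (Node A x B))) + 2" using e by (simp add: W_def)
  then show ?thesis using 1 2 3 4 unfolding W_def by (smt (verit))
qed

lemma zigzag_r:
  assumes pos: "\<forall>y. w y > 0"
    and disj: "set_tree (Node l a A) \<inter> set_tree (Node B b rr) = {}"
  shows "Ps w (Node (Node l a A) x (Node B b rr)) - Ps w (Node l a (Node (Node A x B) b rr)) + 2
     \<le> 3 * (log 2 (ws w (Node l a (Node (Node A x B) b rr))) - log 2 (ws w (Node A x B)))"
proof -
  define W where "W = ws w (Node l a (Node (Node A x B) b rr))"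
  have e: "ws w (Node (Node l a A) x (Node B b rr)) = W" unfolding W_def ws_def
    by (rule arg_cong[where f="sum w"]) auto
  have 2: "log 2 (ws w (Node A x B)) \<le> log 2 (ws w (Node (Node A x B) b rr))"
    by (intro log_mono2 ws_pos[OF pos] ws_mono[OF pos]) auto
  have 3: "log 2 (ws w (Node l a A)) + log 2 (ws w (Node B b rr)) + 2 \<le> 2 * log 2 W"
  proof (rule key_ineq[OF ws_pos[OF pos] ws_pos[OF pos]])
    have "ws w (Node l a A) + ws w (Node B b rr) = sum w (set_tree (Node l a A) \<union> set_tree (Node B b rr))"
      unfolding ws_def by (rule sum.union_disjoint[symmetric]) (use disj in auto)
    also have "\<dots> \<le> W" unfolding W_def ws_def by (rule sum_mono2) (use pos in \<open>auto intro: less_imp_le\<close>)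
    finally show "ws w (Node l a A) + ws w (Node B b rr) \<le> W" .
  qed
  have 4: "log 2 (ws w (Node A x B)) \<le> log 2 W" unfolding W_def
    by (intro log_mono2 ws_pos[OF pos] ws_mono[OF pos]) auto
  have "Ps w (Node (Node l a A) x (Node B b rr)) - Ps w (Node l a (Node (Node A x B) b rr)) + 2
    = log 2 (ws w (Node l a A)) + log 2 (ws w (Node B b rr)) - log 2 (ws w (Node A x B))
      - log 2 (ws w (Node (Node A x B) b rr)) + 2" using e by (simp add: W_def)
  then show ?thesis using 2 3 4 unfolding W_def by (smt (verit))
qed

lemma zig_l:
  assumes pos: "\<forall>y. w y > 0"
  shows "Ps w (Node A x (Node B a r)) - Ps w (Node (Node A x B) a r) + 1
     \<le> 1 + (log 2 (ws w (Node (Node A x B) a r)) - log 2 (ws w (Node A x B)))"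
proof -
  define W where "W = ws w (Node (Node A x B) a r)"
  have e: "ws w (Node A x (Node B a r)) = W" unfolding W_def ws_def
    by (rule arg_cong[where f="sum w"]) auto
  have 1: "log 2 (ws w (Node B a r)) \<le> log 2 W" unfolding W_def
    by (intro log_mono2 ws_pos[OF pos] ws_mono[OF pos]) auto
  have "Ps w (Node A x (Node B a r)) - Ps w (Node (Node A x B) a r) + 1
    = log 2 (ws w (Node B a r)) - log 2 (ws w (Node A x B)) + 1" using e by (simp add: W_def)
  then show ?thesis using 1 unfolding W_def by (smt (verit))
qed

lemma zig_r:
  assumes pos: "\<forall>y. w y > 0"
  shows "Ps w (Node (Node l a A) x B) - Ps w (Node l a (Node A x B)) + 1
     \<le> 1 + (log 2 (ws w (Node l a (Node A x B))) - log 2 (ws w (Node A x B)))"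
proof -
  define W where "W = ws w (Node l a (Node A x B))"
  have e: "ws w (Node (Node l a A) x B) = W" unfolding W_def ws_def
    by (rule arg_cong[where f="sum w"]) auto
  have 1: "log 2 (ws w (Node l a A)) \<le> log 2 W" unfolding W_def
    by (intro log_mono2 ws_pos[OF pos] ws_mono[OF pos]) auto
  have "Ps w (Node (Node l a A) x B) - Ps w (Node l a (Node A x B)) + 1
    = log 2 (ws w (Node l a A)) - log 2 (ws w (Node A x B)) + 1" using e by (simp add: W_def)
  then show ?thesis using 1 unfolding W_def by (smt (verit))
qed



lemma splay_even_main:
  assumes pos: "\<forall>y. w y > 0"
  shows "bst t \<Longrightarrow> x \<in> set_tree t \<Longrightarrow> even (key_depth t x) \<Longrightarrow>
    (\<exists>A B. splay_even x t = Node A x B) \<and> set_tree (splay_even x t) = set_tree t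
    \<and> bst (splay_even x t)
    \<and> Ps w (splay_even x t) - Ps w t + key_depth t x \<le> 3 * (log 2 (ws w t) - log 2 (w x))"
proof (induction x t rule: splay_even.induct)
  case (1 x)
  then show ?case by simp
next
  case (2 x l a r)
  show ?case
  proof (cases "x = a")
    case True
    have "w x \<le> ws w (Node l a r)" unfolding ws_def using True pos
      by (intro member_le_sum) (auto intro: less_imp_le)
    hence "log 2 (w x) \<le> log 2 (ws w (Node l a r))" using pos by (intro log_mono2) auto
    thus ?thesis using True "2.prems" by simp
  next
    case ne: False
    show ?thesis
    proof (cases "x < a")
      case lt: True
      have xl: "x \<in> set_tree l" using "2.prems" lt by auto
      then obtain ll b lr where l: "l = Node ll b lr" by (cases l) auto
      have xb: "x \<noteq> b" using "2.prems"(3) ne lt l by auto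
      show ?thesis
      proof (cases "x < b")
        case True
        have xll: "x \<in> set_tree ll" using xl l True "2.prems"(1) by auto
        have ev: "even (key_depth ll x)" using "2.prems"(3) ne lt l xb True by simp
        have bll: "bst ll" using "2.prems"(1) l by simp
        from "2.IH"(1)[OF ne lt l xb True bll xll ev] obtain A B where
          s: "splay_even x ll = Node A x B" and ss: "set_tree (Node A x B) = set_tree ll"
          and sb: "bst (Node A x B)"
          and sc: "Ps w (Node A x B) - Ps w ll + key_depth ll x \<le> 3*(log 2 (ws w ll) - log 2 (w x))"
          by auto
        have res: "splay_even x (Node l a r) = Node A x (Node B b (Node lr a r))"
          using ne lt l True s by simp
        have dp: "key_depth (Node l a r) x = 2 + key_depth ll x" using ne lt l True xb by simp
        have T: "\<forall>y\<in>set_tree ll. y < b" "\<forall>y\<in>set_tree lr. b < y" "b < a"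
          "\<forall>y\<in>set_tree r. a < y" "bst lr" "bst r"
          using "2.prems"(1) l by auto
        have S: "bst A" "bst B" "\<forall>y\<in>set_tree A. y < x" "\<forall>y\<in>set_tree B. x < y"
          "set_tree A \<subseteq> set_tree ll" "set_tree B \<subseteq> set_tree ll" using sb ss by auto
        have h1: "\<forall>y\<in>set_tree (Node A x B). y < b" using ss T(1) by auto
        have h2: "\<forall>y\<in>set_tree (Node lr a r). b < y" using T(2,3,4) by (auto intro: less_trans)
        have disj: "set_tree (Node A x B) \<inter> set_tree (Node lr a r) = {}"
          using h1 h2 by (meson disjoint_iff less_asym)
        note z = zigzig_l[OF pos disj, of b]
        have e1: "ws w (Node (Node (Node A x B) b lr) a r) = ws w (Node l a r)"
          using ss l by (simp add: ws_def)
        have e2: "ws w (Node A x B) = ws w ll" using ss by (simp add: ws_def)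
        have e3: "Ps w (Node (Node (Node A x B) b lr) a r) - Ps w (Node l a r) = Ps w (Node A x B) - Ps w ll"
          using ss l by (simp add: ws_def)
        have cost: "Ps w (splay_even x (Node l a r)) - Ps w (Node l a r) + key_depth (Node l a r) x
            \<le> 3 * (log 2 (ws w (Node l a r)) - log 2 (w x))"
          unfolding res dp using z sc e1 e2 e3 by simp
        have c1: "\<forall>y\<in>set_tree lr. x < y" using T(2) True by (auto intro: less_trans)
        have c2: "\<forall>y\<in>set_tree r. x < y" "\<forall>y\<in>set_tree r. b < y" using T(3,4) lt by (auto intro: less_trans)
        have c3: "\<forall>y\<in>set_tree B. y < b" using S(6) T(1) by auto
        have c4: "\<forall>y\<in>set_tree lr. y < a" using "2.prems"(1) l by auto
        have bres: "bst (Node A x (Node B b (Node lr a r)))"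
          using S T c1 c2 c3 c4 True lt by auto
        have sres: "set_tree (Node A x (Node B b (Node lr a r))) = set_tree (Node l a r)"
          using ss l by auto
        show ?thesis using cost bres sres res by simp
      next
        case False
        have xb': "b < x" using False xb by simp
        have xlr: "x \<in> set_tree lr" using xl l xb' "2.prems"(1) by auto
        have ev: "even (key_depth lr x)" using "2.prems"(3) ne lt l xb False by simp
        have blr: "bst lr" using "2.prems"(1) l by simp
        from "2.IH"(2)[OF ne lt l xb False blr xlr ev] obtain A B where
          s: "splay_even x lr = Node A x B" and ss: "set_tree (Node A x B) = set_tree lr"
          and sb: "bst (Node A x B)"
          and sc: "Ps w (Node A x B) - Ps w lr + key_depth lr x \<le> 3*(log 2 (ws w lr) - log 2 (w x))"
          by auto
        have res: "splay_even x (Node l a r) = Node (Node ll b A) x (Node B a r)"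
          using ne lt l False xb s by simp
        have dp: "key_depth (Node l a r) x = 2 + key_depth lr x" using ne lt l False xb by simp
        have T: "\<forall>y\<in>set_tree ll. y < b" "\<forall>y\<in>set_tree lr. b < y" "\<forall>y\<in>set_tree lr. y < a"
          "\<forall>y\<in>set_tree r. a < y" "bst ll" "bst r"
          using "2.prems"(1) l by auto
        have S: "bst A" "bst B" "\<forall>y\<in>set_tree A. y < x" "\<forall>y\<in>set_tree B. x < y"
          "set_tree A \<subseteq> set_tree lr" "set_tree B \<subseteq> set_tree lr" using sb ss by auto
        have c1: "\<forall>y\<in>set_tree ll. y < x" using T(1) xb' by (auto intro: less_trans)
        have c2: "\<forall>y\<in>set_tree r. x < y" using T(4) lt by (auto intro: less_trans)
        have c3: "\<forall>y\<in>set_tree A. b < y" "\<forall>y\<in>set_tree B. y < a" using S(5,6) T(2,3) by auto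
        have h1: "\<forall>y\<in>set_tree (Node ll b A). y < x" using c1 S(3) xb' by auto
        have h2: "\<forall>y\<in>set_tree (Node B a r). x < y" using c2 S(4) lt by auto
        have disj: "set_tree (Node ll b A) \<inter> set_tree (Node B a r) = {}"
          using h1 h2 by (meson disjoint_iff less_asym)
        note z = zigzag_l[OF pos disj, of x]
        have e1: "ws w (Node (Node ll b (Node A x B)) a r) = ws w (Node l a r)"
          using ss l by (simp add: ws_def)
        have e2: "ws w (Node A x B) = ws w lr" using ss by (simp add: ws_def)
        have e3: "Ps w (Node (Node ll b (Node A x B)) a r) - Ps w (Node l a r) = Ps w (Node A x B) - Ps w lr"
          using ss l by (simp add: ws_def)
        have cost: "Ps w (splay_even x (Node l a r)) - Ps w (Node l a r) + key_depth (Node l a r) x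
            \<le> 3 * (log 2 (ws w (Node l a r)) - log 2 (w x))"
          unfolding res dp using z sc e1 e2 e3 by simp
        have bres: "bst (Node (Node ll b A) x (Node B a r))"
          using S T c1 c2 c3 xb' lt by auto
        have sres: "set_tree (Node (Node ll b A) x (Node B a r)) = set_tree (Node l a r)"
          using ss l by auto
        show ?thesis using cost bres sres res by simp
      qed
    next
      case gt: False
      have lt: "a < x" using gt ne by simp
      have xr: "x \<in> set_tree r" using "2.prems" lt by auto
      then obtain rl b rr where r: "r = Node rl b rr" by (cases r) auto
      have xb: "x \<noteq> b" using "2.prems"(3) ne gt r by auto
      show ?thesis
      proof (cases "b < x")
        case True
        have xrr: "x \<in> set_tree rr" using xr r True "2.prems"(1) by auto
        have nb: "\<not> x < b" using True by (simp add: not_less_iff_gr_or_eq)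
        have ev: "even (key_depth rr x)" using "2.prems"(3) ne gt r xb nb by simp
        have brr: "bst rr" using "2.prems"(1) r by simp
        from "2.IH"(3)[OF ne gt r xb True brr xrr ev] obtain A B where
          s: "splay_even x rr = Node A x B" and ss: "set_tree (Node A x B) = set_tree rr"
          and sb: "bst (Node A x B)"
          and sc: "Ps w (Node A x B) - Ps w rr + key_depth rr x \<le> 3*(log 2 (ws w rr) - log 2 (w x))"
          by auto
        have res: "splay_even x (Node l a r) = Node (Node (Node l a rl) b A) x B"
          using ne gt r True s by simp
        have dp: "key_depth (Node l a r) x = 2 + key_depth rr x" using ne gt r nb xb by simp
        have T: "\<forall>y\<in>set_tree l. y < a" "\<forall>y\<in>set_tree rl. a < y" "\<forall>y\<in>set_tree rl. y < b"
          "\<forall>y\<in>set_tree rr. b < y" "a < b" "bst l" "bst rl"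
          using "2.prems"(1) r by auto
        have S: "bst A" "bst B" "\<forall>y\<in>set_tree A. y < x" "\<forall>y\<in>set_tree B. x < y"
          "set_tree A \<subseteq> set_tree rr" "set_tree B \<subseteq> set_tree rr" using sb ss by auto
        have c1: "\<forall>y\<in>set_tree l. y < b" "\<forall>y\<in>set_tree l. y < x" using T(1,5) True by (auto intro: less_trans)
        have c2: "\<forall>y\<in>set_tree rl. y < x" "a < x" using T(3,5) True by (auto intro: less_trans)
        have c3: "\<forall>y\<in>set_tree A. b < y" using S(5) T(4) by auto
        have h1: "\<forall>y\<in>set_tree (Node l a rl). y < b" using c1 T(3,5) by auto
        have h2: "\<forall>y\<in>set_tree (Node A x B). b < y" using ss T(4) by auto
        have disj: "set_tree (Node l a rl) \<inter> set_tree (Node A x B) = {}"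
          using h1 h2 by (meson disjoint_iff less_asym)
        note z = zigzig_r[OF pos disj, of b]
        have e1: "ws w (Node l a (Node rl b (Node A x B))) = ws w (Node l a r)"
          using ss r by (simp add: ws_def)
        have e2: "ws w (Node A x B) = ws w rr" using ss by (simp add: ws_def)
        have e3: "Ps w (Node l a (Node rl b (Node A x B))) - Ps w (Node l a r) = Ps w (Node A x B) - Ps w rr"
          using ss r by (simp add: ws_def)
        have cost: "Ps w (splay_even x (Node l a r)) - Ps w (Node l a r) + key_depth (Node l a r) x
            \<le> 3 * (log 2 (ws w (Node l a r)) - log 2 (w x))"
          unfolding res dp using z sc e1 e2 e3 by simp
        have bres: "bst (Node (Node (Node l a rl) b A) x B)"
          using S T c1 c2 c3 True by auto
        have sres: "set_tree (Node (Node (Node l a rl) b A) x B) = set_tree (Node l a r)"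
          using ss r by auto
        show ?thesis using cost bres sres res by simp
      next
        case False
        have xb': "x < b" using False xb by simp
        have xrl: "x \<in> set_tree rl" using xr r xb' "2.prems"(1) by auto
        have ev: "even (key_depth rl x)" using "2.prems"(3) ne gt r xb xb' by simp
        have brl: "bst rl" using "2.prems"(1) r by simp
        from "2.IH"(4)[OF ne gt r xb False brl xrl ev] obtain A B where
          s: "splay_even x rl = Node A x B" and ss: "set_tree (Node A x B) = set_tree rl"
          and sb: "bst (Node A x B)"
          and sc: "Ps w (Node A x B) - Ps w rl + key_depth rl x \<le> 3*(log 2 (ws w rl) - log 2 (w x))"
          by auto
        have res: "splay_even x (Node l a r) = Node (Node l a A) x (Node B b rr)"
          using ne gt r False xb s by simp
        have dp: "key_depth (Node l a r) x = 2 + key_depth rl x" using ne gt r False xb xb' by simp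
        have T: "\<forall>y\<in>set_tree l. y < a" "\<forall>y\<in>set_tree rl. a < y" "\<forall>y\<in>set_tree rl. y < b"
          "\<forall>y\<in>set_tree rr. b < y" "bst l" "bst rr"
          using "2.prems"(1) r by auto
        have S: "bst A" "bst B" "\<forall>y\<in>set_tree A. y < x" "\<forall>y\<in>set_tree B. x < y"
          "set_tree A \<subseteq> set_tree rl" "set_tree B \<subseteq> set_tree rl" using sb ss by auto
        have c1: "\<forall>y\<in>set_tree l. y < x" using T(1) lt by (auto intro: less_trans)
        have c2: "\<forall>y\<in>set_tree rr. x < y" using T(4) xb' by (auto intro: less_trans)
        have c3: "\<forall>y\<in>set_tree A. a < y" "\<forall>y\<in>set_tree B. y < b" using S(5,6) T(2,3) by auto
        have h1: "\<forall>y\<in>set_tree (Node l a A). y < x" using c1 S(3) lt by auto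
        have h2: "\<forall>y\<in>set_tree (Node B b rr). x < y" using c2 S(4) xb' by auto
        have disj: "set_tree (Node l a A) \<inter> set_tree (Node B b rr) = {}"
          using h1 h2 by (meson disjoint_iff less_asym)
        note z = zigzag_r[OF pos disj, of x]
        have e1: "ws w (Node l a (Node (Node A x B) b rr)) = ws w (Node l a r)"
          using ss r by (simp add: ws_def)
        have e2: "ws w (Node A x B) = ws w rl" using ss by (simp add: ws_def)
        have e3: "Ps w (Node l a (Node (Node A x B) b rr)) - Ps w (Node l a r) = Ps w (Node A x B) - Ps w rl"
          using ss r by (simp add: ws_def)
        have cost: "Ps w (splay_even x (Node l a r)) - Ps w (Node l a r) + key_depth (Node l a r) x
            \<le> 3 * (log 2 (ws w (Node l a r)) - log 2 (w x))"
          unfolding res dp using z sc e1 e2 e3 by simp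
        have bres: "bst (Node (Node l a A) x (Node B b rr))"
          using S T c1 c2 c3 xb' lt by auto
        have sres: "set_tree (Node (Node l a A) x (Node B b rr)) = set_tree (Node l a r)"
          using ss r by auto
        show ?thesis using cost bres sres res by simp
      qed
    qed
  qed
qed



lemma pot_Ps: "bst X \<Longrightarrow> (\<Sum>u\<in>set_tree X. log 2 (\<Sum>y\<in>set_tree (subtree_at X u). w y)) = Ps w X"
proof (induction X)
  case Leaf then show ?case by simp
next
  case (Node l a r)
  have b: "bst l" "bst r" "\<forall>y\<in>set_tree l. y < a" "\<forall>y\<in>set_tree r. a < y" using Node.prems by auto
  have an: "a \<notin> set_tree l" "a \<notin> set_tree r" using b by auto
  have d: "set_tree l \<inter> set_tree r = {}" using b by (meson disjoint_iff less_asym)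
  let ?f = "\<lambda>u. log 2 (\<Sum>y\<in>set_tree (subtree_at (Node l a r) u). w y)"
  have "(\<Sum>u\<in>set_tree (Node l a r). ?f u) = ?f a + (\<Sum>u\<in>set_tree l. ?f u) + (\<Sum>u\<in>set_tree r. ?f u)"
    using an d by (simp add: sum.union_disjoint)
  also have "(\<Sum>u\<in>set_tree l. ?f u) = (\<Sum>u\<in>set_tree l. log 2 (\<Sum>y\<in>set_tree (subtree_at l u). w y))"
    using b(3) by (intro sum.cong) (auto simp: less_imp_neq)
  also have "(\<Sum>u\<in>set_tree r. ?f u) = (\<Sum>u\<in>set_tree r. log 2 (\<Sum>y\<in>set_tree (subtree_at r u). w y))"
    using b(4) by (intro sum.cong) (auto dest: less_imp_neq less_asym)
  finally show ?case using Node.IH b by (simp add: ws_def)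
qed

lemma weight_sum: "bst t \<Longrightarrow> (\<Sum>u\<in>set_tree t. (1::real) / 4 ^ key_depth t u) \<le> 2"
proof (induction t)
  case Leaf then show ?case by simp
next
  case (Node l a r)
  have b: "bst l" "bst r" "\<forall>y\<in>set_tree l. y < a" "\<forall>y\<in>set_tree r. a < y" using Node.prems by auto
  have an: "a \<notin> set_tree l" "a \<notin> set_tree r" using b by auto
  have d: "set_tree l \<inter> set_tree r = {}" using b by (meson disjoint_iff less_asym)
  let ?f = "\<lambda>u. (1::real) / 4 ^ key_depth (Node l a r) u"
  have "(\<Sum>u\<in>set_tree (Node l a r). ?f u) = ?f a + (\<Sum>u\<in>set_tree l. ?f u) + (\<Sum>u\<in>set_tree r. ?f u)"
    using an d by (simp add: sum.union_disjoint)
  also have "(\<Sum>u\<in>set_tree l. ?f u) = (\<Sum>u\<in>set_tree l. 1 / 4 ^ key_depth l u) / 4"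
    unfolding sum_divide_distrib using b(3) by (intro sum.cong) (auto simp: less_imp_neq)
  also have "(\<Sum>u\<in>set_tree r. ?f u) = (\<Sum>u\<in>set_tree r. 1 / 4 ^ key_depth r u) / 4"
    unfolding sum_divide_distrib using b(4) by (intro sum.cong) (auto dest: less_imp_neq less_asym)
  finally show ?case using Node.IH b by simp
qed



lemma splay_main:
  assumes pos: "\<forall>y. w y > 0" and bt: "bst t" and xt: "x \<in> set_tree t"
  shows "set_tree (splay x t) = set_tree t \<and> bst (splay x t) \<and>
    Ps w (splay x t) - Ps w t + key_depth t x \<le> 1 + 3 * (log 2 (ws w t) - log 2 (w x))"
proof (cases t)
  case Leaf then show ?thesis using xt by simp
next
  case (Node l a r)
  show ?thesis
  proof (cases "even (key_depth t x)")
    case True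
    from splay_even_main[OF pos bt xt True] show ?thesis using True Node by auto
  next
    case odd: False
    have ne: "x \<noteq> a" using odd Node by auto
    have b: "bst l" "bst r" "\<forall>y\<in>set_tree l. y < a" "\<forall>y\<in>set_tree r. a < y" using bt Node by auto
    show ?thesis
    proof (cases "x < a")
      case lt: True
      have xl: "x \<in> set_tree l" using xt Node ne lt b by auto
      have ev: "even (key_depth l x)" using odd Node ne lt by simp
      from splay_even_main[OF pos b(1) xl ev] obtain A B where
          s: "splay_even x l = Node A x B" and ss: "set_tree (Node A x B) = set_tree l"
          and sb: "bst (Node A x B)"
          and sc: "Ps w (Node A x B) - Ps w l + key_depth l x \<le> 3*(log 2 (ws w l) - log 2 (w x))"
        by auto
      have res: "splay x t = Node A x (Node B a r)" using Node odd lt s by simp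
      have dp: "key_depth t x = 1 + key_depth l x" using Node ne lt by simp
      note z = zig_l[OF pos, of A x B a r]
      have e1: "ws w (Node (Node A x B) a r) = ws w t" using ss Node by (simp add: ws_def)
      have e2: "ws w (Node A x B) = ws w l" using ss by (simp add: ws_def)
      have e3: "Ps w (Node (Node A x B) a r) - Ps w t = Ps w (Node A x B) - Ps w l"
        using ss Node by (simp add: ws_def)
      have l1: "log 2 (ws w l) \<le> log 2 (ws w t)"
        using xl Node by (intro log_mono2 ws_mono[OF pos]) (auto simp: ws_def intro!: sum_pos pos[rule_format])
      have cost: "Ps w (splay x t) - Ps w t + key_depth t x \<le> 1 + 3 * (log 2 (ws w t) - log 2 (w x))"
        unfolding res dp using z sc e1 e2 e3 l1 by simp
      have S: "bst A" "bst B" "\<forall>y\<in>set_tree A. y < x" "\<forall>y\<in>set_tree B. x < y"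
          "set_tree B \<subseteq> set_tree l" using sb ss by auto
      have c: "\<forall>y\<in>set_tree r. x < y" using b(4) lt by (auto intro: less_trans)
      have bres: "bst (Node A x (Node B a r))" using S b c lt by auto
      have sres: "set_tree (Node A x (Node B a r)) = set_tree t" using ss Node by auto
      show ?thesis using cost bres sres res by simp
    next
      case False
      have lt: "a < x" using False ne by simp
      have xr: "x \<in> set_tree r" using xt Node ne lt b by auto
      have ev: "even (key_depth r x)" using odd Node ne False by simp
      from splay_even_main[OF pos b(2) xr ev] obtain A B where
          s: "splay_even x r = Node A x B" and ss: "set_tree (Node A x B) = set_tree r"
          and sb: "bst (Node A x B)"
          and sc: "Ps w (Node A x B) - Ps w r + key_depth r x \<le> 3*(log 2 (ws w r) - log 2 (w x))"
        by auto
      have res: "splay x t = Node (Node l a A) x B" using Node odd False s by simp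
      have dp: "key_depth t x = 1 + key_depth r x" using Node ne False by simp
      note z = zig_r[OF pos, of l a A x B]
      have e1: "ws w (Node l a (Node A x B)) = ws w t" using ss Node by (simp add: ws_def)
      have e2: "ws w (Node A x B) = ws w r" using ss by (simp add: ws_def)
      have e3: "Ps w (Node l a (Node A x B)) - Ps w t = Ps w (Node A x B) - Ps w r"
        using ss Node by (simp add: ws_def)
      have l1: "log 2 (ws w r) \<le> log 2 (ws w t)"
        using xr Node by (intro log_mono2 ws_mono[OF pos]) (auto simp: ws_def intro!: sum_pos pos[rule_format])
      have cost: "Ps w (splay x t) - Ps w t + key_depth t x \<le> 1 + 3 * (log 2 (ws w t) - log 2 (w x))"
        unfolding res dp using z sc e1 e2 e3 l1 by simp
      have S: "bst A" "bst B" "\<forall>y\<in>set_tree A. y < x" "\<forall>y\<in>set_tree B. x < y"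
          "set_tree A \<subseteq> set_tree r" using sb ss by auto
      have c: "\<forall>y\<in>set_tree l. y < x" using b(3) lt by (auto intro: less_trans)
      have bres: "bst (Node (Node l a A) x B)" using S b c lt by auto
      have sres: "set_tree (Node (Node l a A) x B) = set_tree t" using ss Node by auto
      show ?thesis using cost bres sres res by simp
    qed
  qed
qed

lemma log_weight: "log 2 (weight T v) = - 2 * real (key_depth T v)"
proof -
  have "weight T v = 1 / 2 ^ (2 * key_depth T v)"
    unfolding weight_def by (simp add: power_mult)
  also have "log 2 \<dots> = log 2 1 - log 2 (2 ^ (2 * key_depth T v))"
    by (rule log_divide_pos) auto
  also have "\<dots> = - 2 * real (key_depth T v)" by (subst log_pow_cancel) auto
  finally show ?thesis .
qed

theorem lemma4p4:
  fixes T S :: "'a::linorder tree" and v :: 'a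
  assumes "bst T" and "bst S" and "set_tree T = set_tree S" and "v \<in> set_tree S"
  shows "splay_amortized_cost T S v \<le> 4 + 6 * real (key_depth T v)"
proof -
  define w where "w = weight T"
  have pos: "\<forall>y. w y > 0" unfolding w_def weight_def by simp
  note sm = splay_main[OF pos assms(2) assms(4)]
  have potS: "pot T S = Ps w S" unfolding pot_def wsize_def w_def using pot_Ps[OF assms(2)] .
  have potS': "pot T (splay v S) = Ps w (splay v S)" unfolding pot_def wsize_def w_def
    using pot_Ps sm w_def by blast
  have cost: "splay_amortized_cost T S v = Ps w (splay v S) - Ps w S + key_depth S v"
    unfolding splay_amortized_cost_def Phi_def potS potS' by simp
  have "ws w S = (\<Sum>u\<in>set_tree T. 1 / 4 ^ key_depth T u)"
    unfolding ws_def w_def weight_def using assms(3) by simp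
  also have "\<dots> \<le> 2" by (rule weight_sum[OF assms(1)])
  finally have "ws w S \<le> 2" .
  moreover have "ws w S > 0" unfolding ws_def using assms(4) pos by (intro sum_pos) auto
  ultimately have "log 2 (ws w S) \<le> log 2 2" by (intro log_mono2) auto
  hence l: "log 2 (ws w S) \<le> 1" by simp
  show ?thesis using sm cost l log_weight[of T v] unfolding w_def by simp
qed


end
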